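(* Let $\psi\in C^2((0,\infty))$ be concave with $\psi''(1)\neq0\neq\psi'(1)$, let $d>0$, and let $G=(V,E)$ be a finite graph satisfying $CD\psi(d,0)$. Then $G$ satisfies $CD\!\left(\frac{-\psi''(1)}{\psi'(1)^2}\,d,\,0\right)$.
   Context: A finite graph $G=(V,E)$: finite set $V$, irreflexive symmetric relation $E$; $v\sim w$ iff $(v,w)\in E$. $C(V)$: real functions on $V$; $C^+(V)$: positive ones. Laplacian $\Delta f(v)=\sum_{w\sim v}(f(w)-f(v))$. $\Gamma(f,g):=\frac12(\Delta(fg)-f\Delta g-g\Delta f)$, $\Gamma(f)=\Gamma(f,f)$, $\Gamma_2(f):=\frac12(\Delta\Gamma(f)-2\Gamma(f,\Delta f))$. $G$ satisfies $CD(d,0)$ if $\Gamma_2(f)\ge\frac1d(\Delta f)^2$ for all $f\in C(V)$. For $f\in C^+(V)$: $(\Delta^\psi f)(v):=\Delta\big[\psi\big(\tfrac{f}{f(v)}\big)\big](v)$; $(\Omega^\psi f)(v):=\Delta\Big[\psi'\big(\tfrac{f}{f(v)}\big)\cdot\tfrac{f}{f(v)}\cdot\big(\tfrac{\Delta f}{f}-\tfrac{(\Delta f)(v)}{f(v)}\big)\Big](v)$; $2\Gamma_2^\psi(f):=\Omega^\psi f+\frac{\Delta f\,\Delta^\psi f}{f}-\frac{\Delta(f\,\Delta^\psi f)}{f}$. $G$ satisfies $CD\psi(d,0)$ if $\Gamma_2^\psi(f)\ge\frac1d(\Delta^\psi f)^2$ for all $f\in C^+(V)$. *)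

theory Defs
  imports "HOL-Analysis.Analysis"
begin

definition fin_graph :: "'a set \<Rightarrow> ('a \<Rightarrow> 'a \<Rightarrow> bool) \<Rightarrow> bool" where
  "fin_graph V E \<longleftrightarrow> finite V \<and> (\<forall>v w. E v w \<longrightarrow> v \<in> V \<and> w \<in> V)
     \<and> (\<forall>v w. E v w \<longrightarrow> E w v) \<and> (\<forall>v. \<not> E v v)"

definition lap :: "'a set \<Rightarrow> ('a \<Rightarrow> 'a \<Rightarrow> bool) \<Rightarrow> ('a \<Rightarrow> real) \<Rightarrow> 'a \<Rightarrow> real" where
  "lap V E f v = (\<Sum>w\<in>{w\<in>V. E v w}. f w - f v)"

definition Gam :: "'a set \<Rightarrow> ('a \<Rightarrow> 'a \<Rightarrow> bool) \<Rightarrow> ('a \<Rightarrow> real) \<Rightarrow> ('a \<Rightarrow> real) \<Rightarrow> 'a \<Rightarrow> real" where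
  "Gam V E f g v = (1/2) * (lap V E (\<lambda>x. f x * g x) v - f v * lap V E g v - g v * lap V E f v)"

definition Gam2 :: "'a set \<Rightarrow> ('a \<Rightarrow> 'a \<Rightarrow> bool) \<Rightarrow> ('a \<Rightarrow> real) \<Rightarrow> 'a \<Rightarrow> real" where
  "Gam2 V E f v = (1/2) * (lap V E (\<lambda>x. Gam V E f f x) v - 2 * Gam V E f (lap V E f) v)"

definition CD :: "'a set \<Rightarrow> ('a \<Rightarrow> 'a \<Rightarrow> bool) \<Rightarrow> real \<Rightarrow> bool" where
  "CD V E d \<longleftrightarrow> (\<forall>f. \<forall>v\<in>V. Gam2 V E f v \<ge> (1/d) * (lap V E f v)^2)"

definition lap_psi :: "(real \<Rightarrow> real) \<Rightarrow> 'a set \<Rightarrow> ('a \<Rightarrow> 'a \<Rightarrow> bool) \<Rightarrow> ('a \<Rightarrow> real) \<Rightarrow> 'a \<Rightarrow> real" where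
  "lap_psi \<psi> V E f v = lap V E (\<lambda>w. \<psi> (f w / f v)) v"

definition Omega_psi :: "(real \<Rightarrow> real) \<Rightarrow> 'a set \<Rightarrow> ('a \<Rightarrow> 'a \<Rightarrow> bool) \<Rightarrow> ('a \<Rightarrow> real) \<Rightarrow> 'a \<Rightarrow> real" where
  "Omega_psi \<psi> V E f v = lap V E (\<lambda>w. deriv \<psi> (f w / f v) * (f w / f v)
        * (lap V E f w / f w - lap V E f v / f v)) v"

text \<open>Gam2_psi is Gamma_2^psi, i.e. one half of the defining expression for 2 Gamma_2^psi.\<close>
definition Gam2_psi :: "(real \<Rightarrow> real) \<Rightarrow> 'a set \<Rightarrow> ('a \<Rightarrow> 'a \<Rightarrow> bool) \<Rightarrow> ('a \<Rightarrow> real) \<Rightarrow> 'a \<Rightarrow> real" where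
  "Gam2_psi \<psi> V E f v = (1/2) * (Omega_psi \<psi> V E f v
        + lap V E f v * lap_psi \<psi> V E f v / f v
        - lap V E (\<lambda>w. f w * lap_psi \<psi> V E f w) v / f v)"

definition CD_psi :: "(real \<Rightarrow> real) \<Rightarrow> 'a set \<Rightarrow> ('a \<Rightarrow> 'a \<Rightarrow> bool) \<Rightarrow> real \<Rightarrow> bool" where
  "CD_psi \<psi> V E d \<longleftrightarrow> (\<forall>f. (\<forall>v\<in>V. f v > 0) \<longrightarrow>
      (\<forall>v\<in>V. Gam2_psi \<psi> V E f v \<ge> (1/d) * (lap_psi \<psi> V E f v)^2))"

definition C2_pos :: "(real \<Rightarrow> real) \<Rightarrow> bool" where
  "C2_pos \<psi> \<longleftrightarrow> (\<forall>x>0. \<psi> differentiable at x \<and> deriv \<psi> differentiable at x)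
     \<and> continuous_on {0<..} (deriv (deriv \<psi>))"

end

theory Submission
  imports Defs
begin


definition phiT :: "(real\<Rightarrow>real) \<Rightarrow> real \<Rightarrow> real" where
  "phiT \<psi> h = (if h = 0 then deriv (deriv \<psi>) 1 / 2 else (\<psi> (1+h) - \<psi> 1 - deriv \<psi> 1 * h) / h^2)"
definition chiT :: "(real\<Rightarrow>real) \<Rightarrow> real \<Rightarrow> real" where
  "chiT \<psi> h = (if h = 0 then deriv (deriv \<psi>) 1 else (deriv \<psi> (1+h) - deriv \<psi> 1) / h)"

lemma phiT_eq: "\<psi> (1+h) = \<psi> 1 + deriv \<psi> 1 * h + phiT \<psi> h * h^2"
  by (cases "h = 0") (auto simp: phiT_def field_simps)

lemma chiT_eq: "deriv \<psi> (1+h) = deriv \<psi> 1 + h * chiT \<psi> h"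
  by (cases "h = 0") (auto simp: chiT_def field_simps)

lemma ev_small: "eventually (\<lambda>h::real. h \<noteq> 0 \<and> \<bar>h\<bar> < 1) (at 0)"
  unfolding eventually_at by (rule exI[of _ 1]) auto

lemma chiT_cont:
  assumes "deriv \<psi> differentiable at 1"
  shows "isCont (chiT \<psi>) 0"
proof -
  have "DERIV (deriv \<psi>) 1 :> deriv (deriv \<psi>) 1"
    using assms DERIV_deriv_iff_real_differentiable by blast
  hence L: "((\<lambda>h. (deriv \<psi> (1 + h) - deriv \<psi> 1) / h) \<longlongrightarrow> deriv (deriv \<psi>) 1) (at 0)"
    by (simp add: DERIV_def)
  have "((chiT \<psi>) \<longlongrightarrow> deriv (deriv \<psi>) 1) (at 0)"
    apply (rule Lim_transform_eventually[OF L])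
    using ev_small by (rule eventually_mono) (auto simp: chiT_def)
  thus ?thesis by (simp add: isCont_def chiT_def)
qed

lemma phiT_cont:
  assumes "\<forall>x>0. \<psi> differentiable at x \<and> deriv \<psi> differentiable at x"
  shows "isCont (phiT \<psi>) 0"
proof -
  let ?p1 = "deriv \<psi> 1" and ?p2 = "deriv (deriv \<psi>) 1"
  have D1: "DERIV (deriv \<psi>) 1 :> ?p2"
    using assms DERIV_deriv_iff_real_differentiable by auto
  hence L: "((\<lambda>h. (deriv \<psi> (1 + h) - deriv \<psi> 1) / h) \<longlongrightarrow> ?p2) (at 0)"
    by (simp add: DERIV_def)
  have "\<psi> differentiable at 1" using assms by auto
  hence cont: "isCont \<psi> 1" by (rule differentiable_imp_continuous_within)
  have L2: "((\<lambda>h. (\<psi> (1+h) - \<psi> 1 - ?p1 * h) / h^2) \<longlongrightarrow> ?p2/2) (at 0)"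
  proof (rule lhopital[where f' = "\<lambda>h. deriv \<psi> (1+h) - ?p1" and g' = "\<lambda>h. 2*h"])
    have "isCont (\<lambda>h. \<psi> (1+h) - \<psi> 1 - ?p1 * h) 0"
    proof -
      have "isCont (\<lambda>h. \<psi> (1+h)) 0" using isCont_o2[where f="\<lambda>h. 1+h" and a=0 and g=\<psi>] cont by simp
      thus ?thesis by (intro continuous_intros)
    qed
    thus "((\<lambda>h. \<psi> (1+h) - \<psi> 1 - ?p1 * h) \<longlongrightarrow> 0) (at 0)"
      by (simp add: isCont_def)
    show "((\<lambda>h::real. h^2) \<longlongrightarrow> 0) (at 0)" by (intro tendsto_eq_intros) auto
    show "\<forall>\<^sub>F h in at 0. h^2 \<noteq> (0::real)" using ev_small by (rule eventually_mono) auto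
    show "\<forall>\<^sub>F h in at 0. 2*h \<noteq> (0::real)" using ev_small by (rule eventually_mono) auto
    show "\<forall>\<^sub>F h in at 0. DERIV (\<lambda>h. h^2) h :> 2*h"
      by (intro always_eventually allI) (auto intro!: derivative_eq_intros)
    show "\<forall>\<^sub>F h in at 0. DERIV (\<lambda>h. \<psi> (1+h) - \<psi> 1 - ?p1 * h) h :> deriv \<psi> (1+h) - ?p1"
      using ev_small
    proof (rule eventually_mono)
      fix h :: real assume "h \<noteq> 0 \<and> \<bar>h\<bar> < 1"
      hence "1 + h > 0" by auto
      hence "DERIV \<psi> (1+h) :> deriv \<psi> (1+h)"
        using assms DERIV_deriv_iff_real_differentiable by auto
      thus "DERIV (\<lambda>h. \<psi> (1+h) - \<psi> 1 - ?p1 * h) h :> deriv \<psi> (1+h) - ?p1"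
        by (auto intro!: derivative_eq_intros DERIV_chain2[where f=\<psi>])
    qed
    have "((\<lambda>h. ((deriv \<psi> (1 + h) - deriv \<psi> 1) / h) / 2) \<longlongrightarrow> ?p2/2) (at 0)"
      by (intro tendsto_divide L) auto
    thus "((\<lambda>h. (deriv \<psi> (1+h) - ?p1) / (2*h)) \<longlongrightarrow> ?p2/2) (at 0)"
      by (simp add: field_simps)
  qed
  have "((phiT \<psi>) \<longlongrightarrow> ?p2/2) (at 0)"
    apply (rule Lim_transform_eventually[OF L2])
    using ev_small by (rule eventually_mono) (auto simp: phiT_def)
  thus ?thesis by (simp add: isCont_def phiT_def)
qed

lemma p2_nonpos:
  assumes "concave_on {0<..} \<psi>" and "isCont (phiT \<psi>) 0"
  shows "deriv (deriv \<psi>) 1 \<le> 0"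
proof -
  have lim: "((\<lambda>h. phiT \<psi> h + phiT \<psi> (-h)) \<longlongrightarrow> deriv (deriv \<psi>) 1) (at 0)"
  proof -
    have a: "(phiT \<psi> \<longlongrightarrow> deriv (deriv \<psi>) 1 / 2) (at 0)"
      using assms(2) by (simp add: isCont_def phiT_def)
    have "isCont (\<lambda>h. phiT \<psi> (-h)) 0"
      using isCont_o2[where f="\<lambda>h. -h" and a=0 and g="phiT \<psi>"] assms(2) by simp
    hence b: "((\<lambda>h. phiT \<psi> (-h)) \<longlongrightarrow> deriv (deriv \<psi>) 1 / 2) (at 0)"
      by (simp add: isCont_def phiT_def)
    show ?thesis using tendsto_add[OF a b] by simp
  qed
  have ev: "eventually (\<lambda>h. phiT \<psi> h + phiT \<psi> (-h) \<le> 0) (at (0::real))"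
    using ev_small
  proof (rule eventually_mono)
    fix h :: real assume h: "h \<noteq> 0 \<and> \<bar>h\<bar> < 1"
    have "(1/2) * \<psi> (1-h) + (1/2) * \<psi> (1+h) \<le> \<psi> ((1/2) *\<^sub>R (1-h) + (1/2) *\<^sub>R (1+h))"
    proof -
      have cv: "\<forall>x\<in>{0<..}. \<forall>y\<in>{0<..}. \<forall>u\<ge>0. \<forall>v\<ge>0. u + v = 1 \<longrightarrow> \<psi> (u *\<^sub>R x + v *\<^sub>R y) \<ge> u * \<psi> x + v * \<psi> y"
        using assms(1) unfolding concave_on_iff by blast
      have "(1-h) \<in> {0<..}" "(1+h) \<in> {0<..}" using h by auto
      from cv[rule_format, OF this, of "1/2" "1/2"] show ?thesis by simp
    qed
    moreover have "(1 - h) / 2 + (1 + h) / 2 = (1::real)" by (simp add: field_simps)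
    ultimately have "\<psi> (1+h) + \<psi> (1+(-h)) - 2 * \<psi> 1 \<le> 0" by simp
    hence "(phiT \<psi> h + phiT \<psi> (-h)) * h^2 \<le> 0"
      using phiT_eq[of \<psi> h] phiT_eq[of \<psi> "-h"] by (simp add: algebra_simps)
    moreover have "h^2 > 0" using h by simp
    ultimately show "phiT \<psi> h + phiT \<psi> (-h) \<le> 0" by (simp add: mult_le_0_iff)
  qed
  show ?thesis
    by (rule tendsto_le[OF at_neq_bot tendsto_const lim ev])
qed



lemma lap_lin: "lap V E (\<lambda>x. 1 + e * g x) x = e * lap V E g x"
  unfolding lap_def by (simp add: sum_distrib_left algebra_simps)

lemma Gam_sum: "Gam V E f h x = (1/2) * (\<Sum>w\<in>{w\<in>V. E x w}. (f w - f x) * (h w - h x))"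
proof -
  have "lap V E (\<lambda>x. f x * h x) x - f x * lap V E h x - h x * lap V E f x
     = (\<Sum>w\<in>{w\<in>V. E x w}. (f w * h w - f x * h x) - f x * (h w - h x) - h x * (f w - f x))"
    unfolding lap_def by (simp only: sum_subtractf sum_distrib_left[symmetric])
  also have "\<dots> = (\<Sum>w\<in>{w\<in>V. E x w}. (f w - f x) * (h w - h x))"
    by (rule sum.cong) (auto simp: algebra_simps)
  finally show ?thesis unfolding Gam_def by simp
qed

definition Sf :: "(real\<Rightarrow>real) \<Rightarrow> 'a set \<Rightarrow> ('a \<Rightarrow> 'a \<Rightarrow> bool) \<Rightarrow> ('a\<Rightarrow>real) \<Rightarrow> real \<Rightarrow> 'a \<Rightarrow> real" where
  "Sf \<psi> V E g e x = (\<Sum>w\<in>{w\<in>V. E x w}. phiT \<psi> (e * (g w - g x) / (1 + e * g x)) * (g w - g x)^2)"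

lemma L_expr:
  assumes "1 + e * g x \<noteq> 0"
  shows "lap_psi \<psi> V E (\<lambda>x. 1 + e * g x) x
    = e * deriv \<psi> 1 / (1 + e * g x) * lap V E g x + e^2 / (1 + e * g x)^2 * Sf \<psi> V E g e x"
proof -
  let ?fx = "1 + e * g x"
  have "lap_psi \<psi> V E (\<lambda>x. 1 + e * g x) x
     = (\<Sum>w\<in>{w\<in>V. E x w}. e * deriv \<psi> 1 / ?fx * (g w - g x)
          + e^2 / ?fx^2 * (phiT \<psi> (e * (g w - g x) / ?fx) * (g w - g x)^2))"
    unfolding lap_psi_def lap_def
  proof (rule sum.cong[OF refl])
    fix w
    let ?h = "e * (g w - g x) / ?fx"
    have q: "(1 + e * g w) / ?fx = 1 + ?h" using assms by (simp add: field_simps)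
    show "\<psi> ((1 + e * g w) / ?fx) - \<psi> (?fx / ?fx) = e * deriv \<psi> 1 / ?fx * (g w - g x)
          + e^2 / ?fx^2 * (phiT \<psi> ?h * (g w - g x)^2)"
      unfolding q using assms phiT_eq[of \<psi> ?h] by (simp add: field_simps power2_eq_square)
  qed
  also have "\<dots> = e * deriv \<psi> 1 / ?fx * lap V E g x + e^2 / ?fx^2 * Sf \<psi> V E g e x"
    unfolding lap_def Sf_def by (simp add: sum.distrib sum_distrib_left)
  finally show ?thesis .
qed

definition Kf :: "(real\<Rightarrow>real) \<Rightarrow> 'a set \<Rightarrow> ('a \<Rightarrow> 'a \<Rightarrow> bool) \<Rightarrow> ('a\<Rightarrow>real) \<Rightarrow> 'a \<Rightarrow> real \<Rightarrow> 'a \<Rightarrow> real" where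
  "Kf \<psi> V E g v e w = chiT \<psi> (e * (g w - g v) / (1 + e * g v)) * (g w - g v) / (1 + e * g v)
       * ((1 + e * g w) / (1 + e * g v)) * (lap V E g w / (1 + e * g w) - lap V E g v / (1 + e * g v))
     - Sf \<psi> V E g e w / ((1 + e * g v) * (1 + e * g w)) + Sf \<psi> V E g e v / (1 + e * g v)^2
     + e * (g w - g v) * Sf \<psi> V E g e v / (1 + e * g v)^3"

lemma summand_eq0:
  fixes e u w p1 Dw Dv Sw Sv X :: real
  assumes fw: "u \<noteq> 0" and fv: "w \<noteq> 0"
  shows "(p1 + (u - w) / w * X) * (u / w) * (e * Dw / u - e * Dv / w)
        + (u - w) * (e * p1 / w * Dv + e^2 / w^2 * Sv) / w
        - (u * (e * p1 / u * Dw + e^2 / u^2 * Sw) - w * (e * p1 / w * Dv + e^2 / w^2 * Sv)) / w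
    = e^2 * (X * ((u - w)/e) / w * (u / w) * (Dw / u - Dv / w)
       - Sw / (w * u) + Sv / w^2 + (u - w) * Sv / w^3)"
  using fw fv by (cases "e = 0") (simp_all add: field_simps power2_eq_square power3_eq_cube)

lemma G2_expr:
  assumes e: "e \<noteq> 0" and fv: "1 + e * g v \<noteq> 0"
    and fN: "\<And>w. w \<in> V \<Longrightarrow> E v w \<Longrightarrow> 1 + e * g w \<noteq> 0"
  shows "Gam2_psi \<psi> V E (\<lambda>x. 1 + e * g x) v = (1/2) * e^2 * (\<Sum>w\<in>{w\<in>V. E v w}. Kf \<psi> V E g v e w)"
proof -
  let ?f = "\<lambda>x. 1 + e * g x"
  let ?N = "{w\<in>V. E v w}"
  let ?L = "lap_psi \<psi> V E ?f"
  define H where "H w = deriv \<psi> (?f w / ?f v) * (?f w / ?f v) * (lap V E ?f w / ?f w - lap V E ?f v / ?f v)" for w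
  have Hv: "H v = 0" unfolding H_def by simp
  have Om: "Omega_psi \<psi> V E ?f v = (\<Sum>w\<in>?N. H w)"
  proof -
    have "Omega_psi \<psi> V E ?f v = lap V E H v" unfolding Omega_psi_def H_def by simp
    thus ?thesis unfolding lap_def[of V E H v] Hv by simp
  qed
  have T2: "lap V E ?f v * ?L v / ?f v = (\<Sum>w\<in>?N. (?f w - ?f v) * ?L v / ?f v)"
    unfolding lap_def[of V E ?f v] by (simp add: sum_distrib_right sum_divide_distrib)
  have T3: "lap V E (\<lambda>w. ?f w * ?L w) v / ?f v = (\<Sum>w\<in>?N. (?f w * ?L w - ?f v * ?L v) / ?f v)"
    unfolding lap_def[of V E "\<lambda>w. ?f w * ?L w" v] by (simp add: sum_divide_distrib)
  have "Gam2_psi \<psi> V E ?f v = (1/2) * (\<Sum>w\<in>?N. H w + (?f w - ?f v) * ?L v / ?f v - (?f w * ?L w - ?f v * ?L v) / ?f v)"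
    unfolding Gam2_psi_def Om T2 T3 by (simp add: sum.distrib sum_subtractf)
  also have "(\<Sum>w\<in>?N. H w + (?f w - ?f v) * ?L v / ?f v - (?f w * ?L w - ?f v * ?L v) / ?f v)
      = (\<Sum>w\<in>?N. e^2 * Kf \<psi> V E g v e w)"
  proof (rule sum.cong[OF refl])
    fix w assume "w \<in> ?N"
    hence fw: "?f w \<noteq> 0" using fN by auto
    let ?h = "e * (g w - g v) / ?f v"
    have q: "?f w / ?f v = 1 + ?h" using fv by (simp add: field_simps)
    have q2: "?h = (?f w - ?f v) / ?f v" by (simp add: algebra_simps)
    have q3: "(?f w - ?f v) / e = g w - g v" using e by (simp add: field_simps)
    have dH: "H w = (deriv \<psi> 1 + (?f w - ?f v) / ?f v * chiT \<psi> ?h) * (?f w / ?f v)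
        * (e * lap V E g w / ?f w - e * lap V E g v / ?f v)"
      unfolding H_def lap_lin q chiT_eq q2[symmetric] by (simp add: q2)
    show "H w + (?f w - ?f v) * ?L v / ?f v - (?f w * ?L w - ?f v * ?L v) / ?f v = e^2 * Kf \<psi> V E g v e w"
      unfolding dH L_expr[where e=e and g=g and x=w, OF fw] L_expr[where e=e and g=g and x=v, OF fv]
      unfolding summand_eq0[OF fw fv] Kf_def q3 q2 by (simp add: algebra_simps)
  qed
  finally show ?thesis by (simp add: sum_distrib_left)
qed



lemma cont_comp0:
  assumes "isCont F 0"
  shows "isCont (\<lambda>e::real. F (e * c / (1 + e * k))) 0"
proof -
  have "isCont (\<lambda>e::real. e * c / (1 + e * k)) 0" by (intro continuous_intros) auto
  thus ?thesis using isCont_o2[where f="\<lambda>e::real. e * c / (1 + e * k)" and a=0 and g=F] assms by simp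
qed

lemma Sf_cont:
  assumes "isCont (phiT \<psi>) 0"
  shows "isCont (\<lambda>e. Sf \<psi> V E g e x) 0"
  unfolding Sf_def by (intro continuous_intros cont_comp0 assms)

lemma Kf_cont:
  assumes "isCont (phiT \<psi>) 0" "isCont (chiT \<psi>) 0"
  shows "isCont (\<lambda>e. Kf \<psi> V E g v e w) 0"
  unfolding Kf_def by (intro continuous_intros cont_comp0 assms Sf_cont) auto

lemma Sf0: "Sf \<psi> V E g 0 x = deriv (deriv \<psi>) 1 * Gam V E g g x"
  unfolding Sf_def Gam_sum by (simp add: phiT_def sum_distrib_left power2_eq_square)

lemma Kf0: "Kf \<psi> V E g v 0 w = deriv (deriv \<psi>) 1 * ((g w - g v) * (lap V E g w - lap V E g v))
    - deriv (deriv \<psi>) 1 * (Gam V E g g w - Gam V E g g v)"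
  unfolding Kf_def Sf0 by (simp add: chiT_def algebra_simps)

lemma sumK0: "(\<Sum>w\<in>{w\<in>V. E v w}. Kf \<psi> V E g v 0 w) = - 2 * deriv (deriv \<psi>) 1 * Gam2 V E g v"
proof -
  have a: "Gam V E g (lap V E g) v = (1/2) * (\<Sum>w\<in>{w\<in>V. E v w}. (g w - g v) * (lap V E g w - lap V E g v))"
    by (rule Gam_sum)
  have b: "lap V E (\<lambda>x. Gam V E g g x) v = (\<Sum>w\<in>{w\<in>V. E v w}. Gam V E g g w - Gam V E g g v)"
    by (rule lap_def)
  have c: "(\<Sum>w\<in>{w\<in>V. E v w}. Kf \<psi> V E g v 0 w)
     = deriv (deriv \<psi>) 1 * (\<Sum>w\<in>{w\<in>V. E v w}. (g w - g v) * (lap V E g w - lap V E g v))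
       - deriv (deriv \<psi>) 1 * (\<Sum>w\<in>{w\<in>V. E v w}. Gam V E g g w - Gam V E g g v)"
    unfolding Kf0 by (subst sum_subtractf) (simp only: sum_distrib_left)
  show ?thesis unfolding c Gam2_def a b by (simp add: algebra_simps)
qed



theorem mainTheorem6:
  fixes \<psi> :: "real \<Rightarrow> real" and d :: real
    and V :: "'a set" and E :: "'a \<Rightarrow> 'a \<Rightarrow> bool"
  assumes "C2_pos \<psi>"
    and "concave_on {0<..} \<psi>"
    and "deriv (deriv \<psi>) 1 \<noteq> 0" and "deriv \<psi> 1 \<noteq> 0"
    and "d > 0"
    and "fin_graph V E"
    and "CD_psi \<psi> V E d"
  shows "CD V E ((- deriv (deriv \<psi>) 1 / (deriv \<psi> 1)^2) * d)"
proof -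
  let ?p1 = "deriv \<psi> 1" and ?p2 = "deriv (deriv \<psi>) 1"
  have dif: "\<forall>x>0. \<psi> differentiable at x \<and> deriv \<psi> differentiable at x"
    using assms(1) unfolding C2_pos_def by blast
  have cphi: "isCont (phiT \<psi>) 0" by (rule phiT_cont[OF dif])
  have cchi: "isCont (chiT \<psi>) 0" by (rule chiT_cont) (use dif in auto)
  have p2neg: "?p2 < 0" using p2_nonpos[OF assms(2) cphi] assms(3) by linarith
  have finV: "finite V" and inV: "\<And>v w. E v w \<Longrightarrow> w \<in> V"
    using assms(6) unfolding fin_graph_def by auto
  show ?thesis unfolding CD_def
  proof (intro allI ballI)
    fix g :: "'a \<Rightarrow> real" and v assume vV: "v \<in> V"
    define M where "M = 1 + (\<Sum>x\<in>V. \<bar>g x\<bar>)"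
    have Mpos: "M > 0" unfolding M_def by (simp add: sum_nonneg add_pos_nonneg)
    have gM: "\<bar>g x\<bar> < M" if "x \<in> V" for x
      using member_le_sum[of x V "\<lambda>x. \<bar>g x\<bar>", OF that _ finV] unfolding M_def by simp
    have ev: "eventually (\<lambda>e. e \<noteq> 0 \<and> (\<forall>x\<in>V. 1 + e * g x > 0)) (at (0::real))"
    proof -
      have "\<forall>e\<in>UNIV. e \<noteq> 0 \<and> dist e 0 < 1/M \<longrightarrow> e \<noteq> 0 \<and> (\<forall>x\<in>V. 1 + e * g x > 0)"
      proof (intro ballI impI conjI)
        fix e :: real assume h: "e \<noteq> 0 \<and> dist e 0 < 1/M"
        show "e \<noteq> 0" using h by simp
        fix x assume "x \<in> V"
        have "\<bar>e * g x\<bar> = \<bar>e\<bar> * \<bar>g x\<bar>" by (simp add: abs_mult)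
        also have "\<dots> \<le> \<bar>e\<bar> * M" using gM[OF \<open>x\<in>V\<close>] by (intro mult_left_mono) auto
        also have "\<dots> < 1" using h Mpos by (simp add: field_simps)
        finally show "1 + e * g x > 0" by linarith
      qed
      moreover have "0 < 1/M" using Mpos by simp
      ultimately show ?thesis unfolding eventually_at by blast
    qed
    define Q where "Q e = ?p1 / (1 + e * g v) * lap V E g v + e / (1 + e * g v)^2 * Sf \<psi> V E g e v" for e
    have ineq: "eventually (\<lambda>e. (1/d) * (Q e)^2 \<le> (1/2) * (\<Sum>w\<in>{w\<in>V. E v w}. Kf \<psi> V E g v e w)) (at 0)"
      using ev
    proof (rule eventually_mono)
      fix e :: real assume h: "e \<noteq> 0 \<and> (\<forall>x\<in>V. 1 + e * g x > 0)"
      have fv: "1 + e * g v \<noteq> 0" using h vV by force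
      have fN: "\<And>w. w \<in> V \<Longrightarrow> E v w \<Longrightarrow> 1 + e * g w \<noteq> 0" using h by force
      have "Gam2_psi \<psi> V E (\<lambda>x. 1 + e * g x) v \<ge> (1/d) * (lap_psi \<psi> V E (\<lambda>x. 1 + e * g x) v)^2"
      proof -
        have "\<And>v. v \<in> V \<Longrightarrow> 0 < (\<lambda>x. 1 + e * g x) v" using h by simp
        from assms(7)[unfolded CD_psi_def, rule_format, of "\<lambda>x. 1 + e * g x", OF this vV] show ?thesis .
      qed
      moreover have "lap_psi \<psi> V E (\<lambda>x. 1 + e * g x) v = e * Q e"
        unfolding L_expr[where e=e and g=g and x=v, OF fv] Q_def by (simp add: algebra_simps power2_eq_square)
      ultimately have "e^2 * ((1/d) * (Q e)^2) \<le> e^2 * ((1/2) * (\<Sum>w\<in>{w\<in>V. E v w}. Kf \<psi> V E g v e w))"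
        using G2_expr[where e=e and g=g and v=v and V=V and E=E and \<psi>=\<psi>, OF _ fv fN] h by (simp add: power_mult_distrib algebra_simps)
      moreover have "e^2 > 0" using h by simp
      ultimately show "(1/d) * (Q e)^2 \<le> (1/2) * (\<Sum>w\<in>{w\<in>V. E v w}. Kf \<psi> V E g v e w)"
        by (meson mult_left_le_imp_le)
    qed
    have limQ: "(Q \<longlongrightarrow> Q 0) (at 0)"
    proof -
      have "isCont Q 0" unfolding Q_def[abs_def]
        by (intro continuous_intros Sf_cont cphi) auto
      thus ?thesis by (simp add: isCont_def)
    qed
    have limK: "((\<lambda>e. (1/2) * (\<Sum>w\<in>{w\<in>V. E v w}. Kf \<psi> V E g v e w)) \<longlongrightarrow>
                  (1/2) * (\<Sum>w\<in>{w\<in>V. E v w}. Kf \<psi> V E g v 0 w)) (at 0)"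
    proof -
      have "isCont (\<lambda>e. (1/2) * (\<Sum>w\<in>{w\<in>V. E v w}. Kf \<psi> V E g v e w)) 0"
        by (intro continuous_intros Kf_cont cphi cchi)
      thus ?thesis by (simp add: isCont_def)
    qed
    have "(1/d) * (Q 0)^2 \<le> (1/2) * (\<Sum>w\<in>{w\<in>V. E v w}. Kf \<psi> V E g v 0 w)"
      by (rule tendsto_le[OF at_neq_bot limK tendsto_mult[OF tendsto_const tendsto_power[OF limQ]] ineq])
    hence key: "(1/d) * (?p1 * lap V E g v)^2 \<le> - ?p2 * Gam2 V E g v"
      unfolding sumK0 Q_def by simp
    have "(1 / (- ?p2 / ?p1^2 * d)) * (lap V E g v)^2 = ((1/d) * (?p1 * lap V E g v)^2) / (- ?p2)"
      using assms(4) p2neg assms(5) by (simp add: field_simps power_mult_distrib)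
    also have "\<dots> \<le> (- ?p2 * Gam2 V E g v) / (- ?p2)"
      using key p2neg by (intro divide_right_mono) auto
    also have "\<dots> = Gam2 V E g v" using p2neg by simp
    finally show "Gam2 V E g v \<ge> (1 / (- ?p2 / ?p1^2 * d)) * (lap V E g v)^2" .
  qed
qed


end
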